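(* For any two words $w_0,w_1\in\mathcal{M}_{n_x,n_y}$ (comparable or not) there are decompositions $w_0=w_0^0w_0^1\cdots w_0^{2k-1}$ and $w_1=w_1^0w_1^1\cdots w_1^{2k-1}$ (concatenations) such that for each $i$, $w_0^i$ and $w_1^i$ have the same numbers of $x$'s and of $y$'s, and $w_0^i\le w_1^i$ if $i$ is even while $w_1^i\le w_0^i$ if $i$ is odd. The words $w_0^0,w_1^0,w_0^{2k-1},w_1^{2k-1}$ may be empty, but all other $w_j^i$ are nonempty.
   Context: $\mathcal{M}_{n_x,n_y}$ is the set of words in letters $x,y$ with $n_x$ $x$'s and $n_y$ $y$'s. For words $u,v$ with the same numbers of each letter, $u\le v$ iff for each $i$ the position of the $i$-th $x$ (from the left) in $u$ is at most its position in $v$. *)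

theory Defs
  imports Main
begin

datatype letter = X | Y

type_synonym word = "letter list"

definition nx :: "word \<Rightarrow> nat" where "nx w = count_list w X"
definition ny :: "word \<Rightarrow> nat" where "ny w = count_list w Y"

definition M :: "nat \<Rightarrow> nat \<Rightarrow> word set" where
  "M a b = {w. nx w = a \<and> ny w = b}"

definition xpos :: "word \<Rightarrow> nat list" where
  "xpos w = filter (\<lambda>i. w ! i = X) [0..<length w]"

definition word_le :: "word \<Rightarrow> word \<Rightarrow> bool" where
  "word_le u v \<longleftrightarrow> nx u = nx v \<and> ny u = ny v \<and>
     (\<forall>i < nx u. xpos u ! i \<le> xpos v ! i)"

end

theory Submission imports Defs begin

lemma nx_append[simp]: "nx (u@v) = nx u + nx v" by (simp add: nx_def)
lemma ny_append[simp]: "ny (u@v) = ny u + ny v" by (simp add: ny_def)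
lemma nx_Nil[simp]: "nx [] = 0" by (simp add: nx_def)
lemma ny_Nil[simp]: "ny [] = 0" by (simp add: ny_def)
lemma nx_Cons[simp]: "nx (c#w) = (if c = X then 1 else 0) + nx w" by (simp add: nx_def)
lemma ny_Cons[simp]: "ny (c#w) = (if c = Y then 1 else 0) + ny w" by (simp add: ny_def)

lemma len_nxny: "length w = nx w + ny w"
  by (induct w) (auto split: letter.splits intro: letter.exhaust)

lemma xpos_snoc: "xpos (u@[c]) = xpos u @ (if c = X then [length u] else [])"
  by (auto simp: xpos_def nth_append intro!: filter_cong)

lemma length_xpos: "length (xpos u) = nx u"
  by (induct u rule: rev_induct) (auto simp: xpos_snoc, simp add: xpos_def)

lemma xpos_bound: "x \<in> set (xpos u) \<Longrightarrow> x < length u"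
  by (simp add: xpos_def)

lemma keyK: "i < nx u \<Longrightarrow> (xpos u ! i < t \<longleftrightarrow> i < nx (take t u))"
proof (induct u arbitrary: i t rule: rev_induct)
  case Nil then show ?case by simp
next
  case (snoc c u)
  show ?case
  proof (cases "i < nx u")
    case True
    have e: "xpos (u@[c]) ! i = xpos u ! i" using True by (simp add: xpos_snoc nth_append length_xpos)
    have b: "xpos u ! i < length u" using True xpos_bound[of "xpos u ! i" u] by (simp add: length_xpos)
    show ?thesis
    proof (cases "t \<le> length u")
      case True
      then show ?thesis using e snoc(1)[OF \<open>i < nx u\<close>, of t] by simp
    next
      case False
      then show ?thesis using e b \<open>i < nx u\<close> by simp
    qed
  next
    case False
    then have c: "c = X" and i: "i = nx u" using snoc(2) by (auto split: if_splits)
    have e: "xpos (u@[c]) ! i = length u" using i c by (simp add: xpos_snoc nth_append length_xpos)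
    have "nx (take t u) \<le> nx u"
      by (metis append_take_drop_id le_add1 nx_append)
    then show ?thesis using e i c by (cases "t \<le> length u") auto
  qed
qed

lemma word_le_pref: "word_le u v \<longleftrightarrow> nx u = nx v \<and> ny u = ny v \<and> (\<forall>t. nx (take t v) \<le> nx (take t u))"
proof
  assume h: "word_le u v"
  then have eq: "nx u = nx v" "ny u = ny v" and le: "\<forall>i<nx u. xpos u ! i \<le> xpos v ! i"
    by (auto simp: word_le_def)
  have "nx (take t v) \<le> nx (take t u)" for t
  proof (rule ccontr)
    assume "\<not> ?thesis"
    then have lt: "nx (take t u) < nx (take t v)" by simp
    have "nx (take t v) \<le> nx v" by (metis append_take_drop_id le_add1 nx_append)
    define i where "i = nx (take t u)"
    have iu: "i < nx u" using lt eq \<open>nx (take t v) \<le> nx v\<close> i_def by simp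
    have "xpos v ! i < t" using keyK[of i v t] iu eq lt i_def by simp
    then have "xpos u ! i < t" using le iu by fastforce
    then have "i < nx (take t u)" using keyK[OF iu] by simp
    then show False using i_def by simp
  qed
  then show "nx u = nx v \<and> ny u = ny v \<and> (\<forall>t. nx (take t v) \<le> nx (take t u))" using eq by simp
next
  assume h: "nx u = nx v \<and> ny u = ny v \<and> (\<forall>t. nx (take t v) \<le> nx (take t u))"
  have "xpos u ! i \<le> xpos v ! i" if i: "i < nx u" for i
  proof (rule ccontr)
    assume "\<not> ?thesis"
    then have "xpos v ! i < Suc (xpos v ! i)" "\<not> xpos u ! i < Suc (xpos v ! i)" by auto
    then show False using keyK[OF i] keyK[of i v] i h by (metis order.strict_trans2)
  qed
  then show "word_le u v" using h by (simp add: word_le_def)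
qed


lemma word_le_refl: "word_le u u" by (simp add: word_le_def)

lemma word_le_len: "word_le u v \<Longrightarrow> length u = length v"
  by (simp add: word_le_def len_nxny)

lemma word_le_app: "word_le u v \<Longrightarrow> word_le u' v' \<Longrightarrow> word_le (u@u') (v@v')"
  unfolding word_le_pref
  by (simp add: word_le_len[unfolded word_le_pref] len_nxny add_mono)

lemma step1: "nx (take (Suc s) w) \<le> nx (take s w) + 1 \<and> nx (take s w) \<le> nx (take (Suc s) w)"
  by (cases "s < length w") (auto simp: take_Suc_conv_app_nth)

lemma sign:
  fixes g :: "nat \<Rightarrow> int"
  assumes "g 0 = 0" "\<forall>s. g (Suc s) \<le> g s + 1 \<and> g s \<le> g (Suc s) + 1"
    "\<forall>s. 0<s \<and> s<t \<longrightarrow> g s \<noteq> 0" "g 1 \<ge> 0"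
  shows "\<forall>s\<le>t. g s \<ge> 0"
proof -
  have "s \<le> t \<longrightarrow> g s \<ge> 0" for s
  proof (induct s)
    case 0 then show ?case using assms by simp
  next
    case (Suc s)
    show ?case
    proof (cases "s = 0")
      case True then show ?thesis using assms by simp
    next
      case False
      show ?thesis
      proof
        assume st: "Suc s \<le> t"
        then have "g s \<ge> 0" using Suc by simp
        moreover have "g s \<noteq> 0" using assms(3) st False by simp
        moreover have "g s \<le> g (Suc s) + 1" using assms(2) by blast
        ultimately show "g (Suc s) \<ge> 0" by linarith
      qed
    qed
  qed
  then show ?thesis by blast
qed


lemma seg_dir:
  assumes t: "t \<le> length w0" "length w0 = length w1"
    and bal: "nx (take t w0) = nx (take t w1)"
    and g: "\<forall>s. int (nx (take s w0)) - int (nx (take s w1)) \<le> int (nx (take (Suc s) w0)) - int (nx (take (Suc s) w1)) + 1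
            \<and> int (nx (take (Suc s) w0)) - int (nx (take (Suc s) w1)) \<le> int (nx (take s w0)) - int (nx (take s w1)) + 1"
    and nz: "\<forall>s. 0<s \<and> s<t \<longrightarrow> nx (take s w0) \<noteq> nx (take s w1)"
    and one: "nx (take 1 w1) \<le> nx (take 1 w0)"
  shows "word_le (take t w0) (take t w1)"
proof -
  let ?g = "\<lambda>s. int (nx (take s w0)) - int (nx (take s w1))"
  have "\<forall>s\<le>t. ?g s \<ge> 0"
    by (rule sign) (use g nz one in auto)
  then have A: "nx (take s (take t w1)) \<le> nx (take s (take t w0))" for s
    by (auto simp: min_def)
  have "ny (take t w0) = ny (take t w1)"
    using len_nxny[of "take t w0"] len_nxny[of "take t w1"] t bal by simp
  then show ?thesis unfolding word_le_pref using A bal by simp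
qed

lemma gstep:
  "int (nx (take s w0)) - int (nx (take s w1)) \<le> int (nx (take (Suc s) w0)) - int (nx (take (Suc s) w1)) + 1
            \<and> int (nx (take (Suc s) w0)) - int (nx (take (Suc s) w1)) \<le> int (nx (take s w0)) - int (nx (take s w1)) + 1"
  using step1[of s w0] step1[of s w1] by linarith

lemma seg:
  assumes t: "t \<le> length w0" "length w0 = length w1"
    and bal: "nx (take t w0) = nx (take t w1)"
    and nz: "\<forall>s. 0<s \<and> s<t \<longrightarrow> nx (take s w0) \<noteq> nx (take s w1)"
  shows "word_le (take t w0) (take t w1) \<or> word_le (take t w1) (take t w0)"
proof (cases "nx (take 1 w1) \<le> nx (take 1 w0)")
  case True
  then show ?thesis using seg_dir[OF t bal _ nz] gstep by blast
next
  case False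
  then have "nx (take 1 w0) \<le> nx (take 1 w1)" by simp
  then show ?thesis using seg_dir[of t w1 w0] t bal nz gstep by (metis)
qed

definition good :: "word \<Rightarrow> word \<Rightarrow> nat \<Rightarrow> word list \<Rightarrow> word list \<Rightarrow> bool" where
 "good w0 w1 k p q \<longleftrightarrow> k \<ge> 1 \<and> length p = 2 * k \<and> length q = 2 * k \<and>
           concat p = w0 \<and> concat q = w1 \<and>
           (\<forall>i < 2 * k. nx (p ! i) = nx (q ! i) \<and> ny (p ! i) = ny (q ! i)) \<and>
           (\<forall>i < 2 * k. (even i \<longrightarrow> word_le (p ! i) (q ! i)) \<and>
                        (odd i \<longrightarrow> word_le (q ! i) (p ! i))) \<and>
           (\<forall>i. 0 < i \<and> i < 2 * k - 1 \<longrightarrow> p ! i \<noteq> [] \<and> q ! i \<noteq> [])"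

lemma nil_iff: "w = [] \<longleftrightarrow> nx w + ny w = 0"
  using len_nxny[of w] by auto

lemma caseA:
  assumes "good r0 r1 k (x0#ps) (y0#qs)" "word_le u0 v0"
  shows "good (u0@r0) (v0@r1) k ((u0@x0)#ps) ((v0@y0)#qs)"
proof -
  have h: "\<forall>i<2*k. even i \<longrightarrow> word_le ((x0#ps)!i) ((y0#qs)!i)" "k\<ge>1" using assms(1) unfolding good_def by auto
  have "word_le x0 y0" using h(1)[rule_format, of 0] h(2) by simp
  then have "word_le (u0@x0) (v0@y0)" using assms by (intro word_le_app)
  then show ?thesis using assms(1)
    unfolding good_def
    using \<open>word_le (u0@x0) (v0@y0)\<close>
    by (auto simp: nth_Cons' word_le_def)
qed


lemma caseB1:
  assumes g: "good r0 r1 k ([]#x1#ps) ([]#y1#qs)" and "word_le v0 u0" "u0 \<noteq> []" "v0 \<noteq> []"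
  shows "good (u0@r0) (v0@r1) k ([]#(u0@x1)#ps) ([]#(v0@y1)#qs)"
proof -
  let ?P = "[]#(u0@x1)#ps" and ?Q = "[]#(v0@y1)#qs" and ?P' = "[]#x1#ps" and ?Q' = "[]#y1#qs"
  have G: "k \<ge> 1" "length ?P' = 2 * k" "length ?Q' = 2 * k"
           "concat ?P' = r0" "concat ?Q' = r1"
           "\<And>i. i < 2 * k \<Longrightarrow> nx (?P' ! i) = nx (?Q' ! i) \<and> ny (?P' ! i) = ny (?Q' ! i)"
           "\<And>i. i < 2 * k \<Longrightarrow> (even i \<longrightarrow> word_le (?P' ! i) (?Q' ! i)) \<and> (odd i \<longrightarrow> word_le (?Q' ! i) (?P' ! i))"
           "\<And>i. 0 < i \<Longrightarrow> i < 2 * k - 1 \<Longrightarrow> ?P' ! i \<noteq> [] \<and> ?Q' ! i \<noteq> []"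
    using g unfolding good_def by auto
  have eqp: "?P!i = ?P'!i" "?Q!i = ?Q'!i" if "i \<noteq> 1" for i
    using that by (auto simp: nth_Cons')
  have "word_le y1 x1" using G(7)[of 1] G(1) by simp
  then have w: "word_le (v0@y1) (u0@x1)" using assms by (intro word_le_app)
  have c: "nx (?P ! i) = nx (?Q ! i) \<and> ny (?P ! i) = ny (?Q ! i)" if "i < 2*k" for i
    using G(6)[OF that] eqp[of i] w by (cases "i = 1") (auto simp: word_le_def)
  have d: "(even i \<longrightarrow> word_le (?P ! i) (?Q ! i)) \<and> (odd i \<longrightarrow> word_le (?Q ! i) (?P ! i))" if "i < 2*k" for i
    using G(7)[OF that] eqp[of i] w by (cases "i = 1") auto
  have e: "?P ! i \<noteq> [] \<and> ?Q ! i \<noteq> []" if "0 < i" "i < 2 * k - 1" for i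
    using G(8)[OF that] eqp[of i] assms(3,4) by (cases "i = 1") auto
  show ?thesis unfolding good_def using G(1-5) c d e by auto
qed

lemma caseB2:
  assumes g: "good r0 r1 k (x0#ps) (y0#qs)" and "word_le v0 u0" "u0 \<noteq> []" "v0 \<noteq> []" "x0 \<noteq> []" "y0 \<noteq> []"
  shows "good (u0@r0) (v0@r1) (Suc k) ([]#u0#x0#ps) ([]#v0#y0#qs)"
proof -
  let ?P = "[]#u0#x0#ps" and ?Q = "[]#v0#y0#qs" and ?P' = "x0#ps" and ?Q' = "y0#qs"
  have G: "k \<ge> 1" "length ?P' = 2 * k" "length ?Q' = 2 * k"
           "concat ?P' = r0" "concat ?Q' = r1"
           "\<And>i. i < 2 * k \<Longrightarrow> nx (?P' ! i) = nx (?Q' ! i) \<and> ny (?P' ! i) = ny (?Q' ! i)"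
           "\<And>i. i < 2 * k \<Longrightarrow> (even i \<longrightarrow> word_le (?P' ! i) (?Q' ! i)) \<and> (odd i \<longrightarrow> word_le (?Q' ! i) (?P' ! i))"
           "\<And>i. 0 < i \<Longrightarrow> i < 2 * k - 1 \<Longrightarrow> ?P' ! i \<noteq> [] \<and> ?Q' ! i \<noteq> []"
    using g unfolding good_def by auto
  have eqp: "?P!(Suc (Suc j)) = ?P'!j" "?Q!(Suc (Suc j)) = ?Q'!j" for j
    by auto
  have cs: "i = 0 \<or> i = 1 \<or> (\<exists>j. i = Suc (Suc j))" for i :: nat
    by presburger
  have c: "nx (?P ! i) = nx (?Q ! i) \<and> ny (?P ! i) = ny (?Q ! i)" if "i < 2*Suc k" for i
    using cs[of i] that G(6) assms(2) by (auto simp: word_le_def)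
  have d: "(even i \<longrightarrow> word_le (?P ! i) (?Q ! i)) \<and> (odd i \<longrightarrow> word_le (?Q ! i) (?P ! i))" if "i < 2*Suc k" for i
    using cs[of i] that G(7) assms(2) by (auto simp: word_le_refl)
  have e: "?P ! i \<noteq> [] \<and> ?Q ! i \<noteq> []" if "0 < i" "i < 2 * Suc k - 1" for i
    using cs[of i] that G(8) assms(3-6) by (auto simp: nth_Cons')
  show ?thesis unfolding good_def using G(1-5) c d e by auto
qed


lemma good_len2: "good r0 r1 k p q \<Longrightarrow> \<exists>x0 x1 ps y0 y1 qs. p = x0#x1#ps \<and> q = y0#y1#qs"
  unfolding good_def
  by (cases p; cases q) (auto, (case_tac list; case_tac lista; auto)+)

lemma good_0: "good r0 r1 k (x0#ps) (y0#qs) \<Longrightarrow> nx x0 = nx y0 \<and> ny x0 = ny y0"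
  unfolding good_def by (metis (no_types, lifting) nth_Cons_0 mult_pos_pos less_le_trans zero_less_one zero_less_numeral)

lemma main: "nx w0 = nx w1 \<Longrightarrow> ny w0 = ny w1 \<Longrightarrow> \<exists>k p q. good w0 w1 k p q"
proof (induct "length w0" arbitrary: w0 w1 rule: less_induct)
  case less
  have len: "length w1 = length w0" using less.prems len_nxny[of w0] len_nxny[of w1] by simp
  show ?case
  proof (cases "length w0 = 0")
    case True
    then have "w0 = []" "w1 = []" using len by auto
    then have "good w0 w1 1 [[],[]] [[],[]]"
      unfolding good_def by (auto simp: word_le_refl less_2_cases_iff)
    then show ?thesis by blast
  next
    case False
    define n where "n = length w0"
    have exn: "0 < n \<and> nx (take n w0) = nx (take n w1)" using False less.prems len n_def by simp
    define t where "t = (LEAST t. 0 < t \<and> nx (take t w0) = nx (take t w1))"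
    have t1: "0 < t \<and> nx (take t w0) = nx (take t w1)"
      unfolding t_def using exn by (rule LeastI)
    have t2: "t \<le> n" unfolding t_def using exn by (rule Least_le)
    have nz: "\<forall>s. 0<s \<and> s<t \<longrightarrow> nx (take s w0) \<noteq> nx (take s w1)"
      unfolding t_def using not_less_Least by blast
    have dir: "word_le (take t w0) (take t w1) \<or> word_le (take t w1) (take t w0)"
      using t1 t2 nz len n_def by (intro seg) auto
    define u0 where "u0 = take t w0"
    define v0 where "v0 = take t w1"
    define r0 where "r0 = drop t w0"
    define r1 where "r1 = drop t w1"
    have w0e: "w0 = u0 @ r0" and w1e: "w1 = v0 @ r1" by (simp_all add: u0_def v0_def r0_def r1_def)
    have u0n: "u0 \<noteq> []" "v0 \<noteq> []" using t1 t2 len n_def False by (auto simp: u0_def v0_def)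
    have lr: "length r0 = length r1" using len by (simp add: r0_def r1_def)
    have "nx u0 = nx v0" using t1 by (simp add: u0_def v0_def)
    then have nxr: "nx r0 = nx r1" using less.prems(1)[unfolded w0e w1e] by simp
    have nyr: "ny r0 = ny r1" using lr nxr len_nxny[of r0] len_nxny[of r1] by simp
    have "length r0 < length w0" using t1 t2 n_def False by (simp add: r0_def)
    then obtain k p q where g: "good r0 r1 k p q" using less.hyps nxr nyr by blast
    then obtain x0 x1 ps y0 y1 qs where pq: "p = x0#x1#ps" "q = y0#y1#qs" using good_len2 by blast
    from dir show ?thesis
    proof
      assume "word_le (take t w0) (take t w1)"
      then have "word_le u0 v0" by (simp add: u0_def v0_def)
      from caseA[OF g[unfolded pq] this] show ?thesis unfolding w0e w1e by blast
    next
      assume "word_le (take t w1) (take t w0)"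
      then have wl: "word_le v0 u0" by (simp add: u0_def v0_def)
      have c0: "nx x0 = nx y0 \<and> ny x0 = ny y0" using good_0 g pq by blast
      show ?thesis
      proof (cases "x0 = []")
        case True
        then have "y0 = []" using c0 nil_iff[of x0] nil_iff[of y0] by simp
        then have "good r0 r1 k ([]#x1#ps) ([]#y1#qs)" using g pq True by simp
        from caseB1[OF this wl u0n] show ?thesis unfolding w0e w1e by blast
      next
        case False
        then have "y0 \<noteq> []" using c0 nil_iff[of x0] nil_iff[of y0] by simp
        moreover have "good r0 r1 k (x0#x1#ps) (y0#y1#qs)" using g pq by simp
        ultimately have "good (u0@r0) (v0@r1) (Suc k) ([]#u0#x0#x1#ps) ([]#v0#y0#y1#qs)"
          using caseB2[OF _ wl u0n False] by blast
        then show ?thesis unfolding w0e w1e by blast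
      qed
    qed
  qed
qed

theorem mainTheorem10:
  fixes w0 w1 :: word and a b :: nat
  assumes "w0 \<in> M a b" and "w1 \<in> M a b"
  shows "\<exists>k::nat. \<exists>p q :: word list. k \<ge> 1 \<and> length p = 2 * k \<and> length q = 2 * k \<and>
           concat p = w0 \<and> concat q = w1 \<and>
           (\<forall>i < 2 * k. nx (p ! i) = nx (q ! i) \<and> ny (p ! i) = ny (q ! i)) \<and>
           (\<forall>i < 2 * k. (even i \<longrightarrow> word_le (p ! i) (q ! i)) \<and>
                        (odd i \<longrightarrow> word_le (q ! i) (p ! i))) \<and>
           (\<forall>i. 0 < i \<and> i < 2 * k - 1 \<longrightarrow> p ! i \<noteq> [] \<and> q ! i \<noteq> [])"
  using main[of w0 w1] assms unfolding good_def M_def by simp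

end
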